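(* Let $(\lambda_n)_{n\ge1}$ be real numbers with $\lambda_n\in(0,1)$ for all $n$, such that $\sum_{n=1}^\infty\lambda_n=\infty$, $n\prod_{k=1}^n(1-\lambda_k)\to0$ as $n\to\infty$, and $\sum_{i=1}^n\frac{\lambda_i}{1-\lambda_i}=O(n)$. Let $(a_n)_{n\ge1}$ be a nonnegative sequence satisfying $a_n\le(1-\lambda_n)a_{n-1}+\prod_{k=1}^n(1-\lambda_k)$ for all $n\ge2$. Then $\lim_{n\to\infty}a_n=0$. *)

theory Defs
  imports "HOL-Analysis.Analysis" "HOL-Library.Landau_Symbols"
begin

end

theory Submission
  imports Defs
begin

theorem corollary3p2:
  fixes lam a :: "nat \<Rightarrow> real"
  assumes lam_range: "\<And>n. n \<ge> 1 \<Longrightarrow> 0 < lam n \<and> lam n < 1"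
    and lam_div: "filterlim (\<lambda>n. \<Sum>k=1..n. lam k) at_top sequentially"
    and lam_prod: "(\<lambda>n. real n * (\<Prod>k=1..n. 1 - lam k)) \<longlonglongrightarrow> 0"
    and lam_bigO: "(\<lambda>n. \<Sum>i=1..n. lam i / (1 - lam i)) \<in> O(\<lambda>n. real n)"
    and a_nonneg: "\<And>n. n \<ge> 1 \<Longrightarrow> a n \<ge> 0"
    and a_rec: "\<And>n. n \<ge> 2 \<Longrightarrow> a n \<le> (1 - lam n) * a (n - 1) + (\<Prod>k=1..n. 1 - lam k)"
  shows "a \<longlonglongrightarrow> 0"
proof -
  define P where "P n = (\<Prod>k=1..n. 1 - lam k)" for n
  have Ppos: "P n > 0" for n
    unfolding P_def using lam_range by (intro prod_pos) auto
  have PSuc: "P (Suc n) = (1 - lam (Suc n)) * P n" for n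
    unfolding P_def by (simp add: prod.nat_ivl_Suc')
  define C where "C = a 1 / P 1"
  have bound: "a n \<le> (C + real n) * P n" if "n \<ge> 1" for n
    using that
  proof (induction n rule: dec_induct)
    case base
    have "a 1 = C * P 1" unfolding C_def using Ppos[of 1] by simp
    then show ?case using Ppos[of 1] by simp
  next
    case (step m)
    have l: "0 < 1 - lam (Suc m)" using lam_range[of "Suc m"] by simp
    have "a (Suc m) \<le> (1 - lam (Suc m)) * a m + P (Suc m)"
      using a_rec[of "Suc m"] step(1) unfolding P_def by simp
    also have "\<dots> \<le> (1 - lam (Suc m)) * ((C + real m) * P m) + P (Suc m)"
      using step(3) l by (intro add_right_mono mult_left_mono) auto
    also have "\<dots> = (C + real (Suc m)) * P (Suc m)"
      unfolding PSuc by (simp add: algebra_simps)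
    finally show ?case .
  qed
  have P0: "P \<longlonglongrightarrow> 0"
  proof (rule tendsto_sandwich[of "\<lambda>_. 0" _ _ "\<lambda>n. real n * P n"])
    show "\<forall>\<^sub>F n in sequentially. 0 \<le> P n" using Ppos by (simp add: less_imp_le)
    show "\<forall>\<^sub>F n in sequentially. P n \<le> real n * P n"
      using eventually_ge_at_top[of "1::nat"]
      by eventually_elim (use Ppos in \<open>auto intro: mult_le_cancel_right1[THEN iffD2]\<close>)
    show "(\<lambda>n. real n * P n) \<longlonglongrightarrow> 0" using lam_prod unfolding P_def by simp
  qed simp
  have "(\<lambda>n. C * P n + real n * P n) \<longlonglongrightarrow> C * 0 + 0"
    using lam_prod unfolding P_def[symmetric] by (intro tendsto_intros P0)
  then have U: "(\<lambda>n. (C + real n) * P n) \<longlonglongrightarrow> 0" by (simp add: algebra_simps)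
  show ?thesis
  proof (rule tendsto_sandwich[OF _ _ tendsto_const U])
    show "\<forall>\<^sub>F n in sequentially. 0 \<le> a n"
      using eventually_ge_at_top[of "1::nat"] by eventually_elim (use a_nonneg in auto)
    show "\<forall>\<^sub>F n in sequentially. a n \<le> (C + real n) * P n"
      using eventually_ge_at_top[of "1::nat"] by eventually_elim (use bound in auto)
  qed
qed

end
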